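(* Let $G$ be a fully supported graph, and let $\mathcal{H}$ be the family of graphs $H=(\{v_1,v_2\},\beta)$ with $\beta(v_1,v_2)=\beta(v_2,v_1)=0$ and $\beta(v_1,v_1)>0$, $\beta(v_2,v_2)>0$ (two isolated vertices each with a self-loop of positive weight). The following are equivalent: (1) $G$ is connected; (2) $G$ is strongly disjoint from some $H\in\mathcal{H}$; (3) $G$ is strongly disjoint from every $H\in\mathcal{H}$.
   Context: A weight function on finite $U$ is $\alpha:U\times U\to\mathbb{R}$, $\alpha\ge0$, symmetric, summing to $1$; degree $p(u)=\sum_{u'}\alpha(u,u')$; a graph is $(U,\alpha)$ with edges $(u,u')$ where $\alpha(u,u')>0$; fully supported means $p(u)>0$ for all $u$; connected means any two distinct vertices are joined by a path of edges. For graphs $(U,\alpha)$, $(V,\beta)$ with degrees $p,q$, a weight joining is a weight function $\gamma$ on $U\times V$ with degree $r(u,v)=\sum_{(u',v')}\gamma((u,v),(u',v'))$ such that $\sum_v r(u,v)=p(u)$, $\sum_u r(u,v)=q(v)$, $p(u)\sum_{\tilde v}\gamma((u,v),(u',\tilde v))=\alpha(u,u')r(u,v)$ and $q(v)\sum_{\tilde u}\gamma((u,v),(\tilde u,v'))=\beta(v,v')r(u,v)$ for all $u,u',v,v'$. The graphs are strongly disjoint if the only weight joining is $\alpha\otimes\beta$, $(\alpha\otimes\beta)((u,v),(u',v'))=\alpha(u,u')\beta(v,v')$. *)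

theory Defs
  imports Complex_Main
begin

definition weight_fun :: "('a::finite \<Rightarrow> 'a \<Rightarrow> real) \<Rightarrow> bool" where
  "weight_fun \<alpha> \<longleftrightarrow> (\<forall>x y. 0 \<le> \<alpha> x y) \<and> (\<forall>x y. \<alpha> x y = \<alpha> y x)
     \<and> (\<Sum>x\<in>UNIV. \<Sum>y\<in>UNIV. \<alpha> x y) = 1"

definition deg :: "('a::finite \<Rightarrow> 'a \<Rightarrow> real) \<Rightarrow> 'a \<Rightarrow> real" where
  "deg \<alpha> u = (\<Sum>u'\<in>UNIV. \<alpha> u u')"

definition fully_supported :: "('a::finite \<Rightarrow> 'a \<Rightarrow> real) \<Rightarrow> bool" where
  "fully_supported \<alpha> \<longleftrightarrow> (\<forall>u. 0 < deg \<alpha> u)"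

definition graph_connected :: "('a::finite \<Rightarrow> 'a \<Rightarrow> real) \<Rightarrow> bool" where
  "graph_connected \<alpha> \<longleftrightarrow> (\<forall>u u'. u \<noteq> u' \<longrightarrow> (\<lambda>x y. 0 < \<alpha> x y)\<^sup>+\<^sup>+ u u')"

definition tensor :: "('a \<Rightarrow> 'a \<Rightarrow> real) \<Rightarrow> ('b \<Rightarrow> 'b \<Rightarrow> real) \<Rightarrow> ('a \<times> 'b) \<Rightarrow> ('a \<times> 'b) \<Rightarrow> real" where
  "tensor \<alpha> \<beta> x y = \<alpha> (fst x) (fst y) * \<beta> (snd x) (snd y)"

definition weight_joining ::
  "('a::finite \<Rightarrow> 'a \<Rightarrow> real) \<Rightarrow> ('b::finite \<Rightarrow> 'b \<Rightarrow> real) \<Rightarrow> (('a \<times> 'b) \<Rightarrow> ('a \<times> 'b) \<Rightarrow> real) \<Rightarrow> bool" where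
  "weight_joining \<alpha> \<beta> \<gamma> \<longleftrightarrow> weight_fun \<gamma>
     \<and> (\<forall>u. (\<Sum>v\<in>UNIV. deg \<gamma> (u, v)) = deg \<alpha> u)
     \<and> (\<forall>v. (\<Sum>u\<in>UNIV. deg \<gamma> (u, v)) = deg \<beta> v)
     \<and> (\<forall>u u' v. deg \<alpha> u * (\<Sum>v'\<in>UNIV. \<gamma> (u, v) (u', v')) = \<alpha> u u' * deg \<gamma> (u, v))
     \<and> (\<forall>u v v'. deg \<beta> v * (\<Sum>u'\<in>UNIV. \<gamma> (u, v) (u', v')) = \<beta> v v' * deg \<gamma> (u, v))"

definition strongly_disjoint ::
  "('a::finite \<Rightarrow> 'a \<Rightarrow> real) \<Rightarrow> ('b::finite \<Rightarrow> 'b \<Rightarrow> real) \<Rightarrow> bool" where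
  "strongly_disjoint \<alpha> \<beta> \<longleftrightarrow> (\<forall>\<gamma>. weight_joining \<alpha> \<beta> \<gamma> \<longrightarrow> \<gamma> = tensor \<alpha> \<beta>)"

definition in_family_H :: "(bool \<Rightarrow> bool \<Rightarrow> real) \<Rightarrow> bool" where
  "in_family_H \<beta> \<longleftrightarrow> weight_fun \<beta> \<and> \<beta> True False = 0 \<and> \<beta> False True = 0
     \<and> 0 < \<beta> True True \<and> 0 < \<beta> False False"

end

theory Submission
  imports Defs
begin

lemma sum_UNIV_prod:
  "(\<Sum>y\<in>(UNIV::('a::finite\<times>'b::finite) set). F y) = (\<Sum>a\<in>UNIV. \<Sum>b\<in>UNIV. F (a,b))"
proof -
  have "(\<Sum>a\<in>UNIV. \<Sum>b\<in>UNIV. F (a,b)) = (\<Sum>(a,b)\<in>UNIV\<times>UNIV. F (a,b))"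
    by (rule sum.cartesian_product)
  then show ?thesis by (simp add: split_def)
qed

lemma deg_prod: "deg \<gamma> (u,v) = (\<Sum>u'\<in>UNIV. \<Sum>v'\<in>UNIV. \<gamma> (u,v) (u',v'))"
  unfolding deg_def by (rule sum_UNIV_prod)

lemma sum_split_compl:
  "(\<Sum>x\<in>(UNIV::'a::finite set). f x) = sum f S + sum f (-S)" for f :: "_ \<Rightarrow> real"
proof -
  have "UNIV = S \<union> (-S)" by auto
  then have "sum f UNIV = sum f (S \<union> -S)" by simp
  also have "\<dots> = sum f S + sum f (-S)"
    by (rule sum.union_disjoint) auto
  finally show ?thesis .
qed

lemma sum_deg: "weight_fun \<alpha> \<Longrightarrow> (\<Sum>u\<in>UNIV. deg \<alpha> u) = 1"
  unfolding weight_fun_def deg_def by simp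

lemma H_facts:
  assumes "in_family_H \<beta>"
  shows "deg \<beta> v = \<beta> v v" "0 < \<beta> v v" "v \<noteq> v' \<Longrightarrow> \<beta> v v' = 0"
    "\<beta> True True + \<beta> False False = 1" "\<And>x y. 0 \<le> \<beta> x y"
  using assms unfolding in_family_H_def weight_fun_def deg_def
  by (cases v; cases v'; simp add: UNIV_bool)+

lemma conn_sd:
  assumes w: "weight_fun \<alpha>" and fs: "fully_supported \<alpha>" and conn: "graph_connected \<alpha>"
    and H: "in_family_H \<beta>" and J: "weight_joining \<alpha> \<beta> \<gamma>"
  shows "\<gamma> = tensor \<alpha> \<beta>"
proof -
  have wg: "weight_fun \<gamma>" and c3: "\<And>v. (\<Sum>u\<in>UNIV. deg \<gamma> (u, v)) = deg \<beta> v"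
    and c4: "\<And>u u' v. deg \<alpha> u * (\<Sum>v'\<in>UNIV. \<gamma> (u, v) (u', v')) = \<alpha> u u' * deg \<gamma> (u, v)"
    and c5: "\<And>u v v'. deg \<beta> v * (\<Sum>u'\<in>UNIV. \<gamma> (u, v) (u', v')) = \<beta> v v' * deg \<gamma> (u, v)"
    using J unfolding weight_joining_def by auto
  have gnn: "\<And>x y. 0 \<le> \<gamma> x y" and gsym: "\<And>x y. \<gamma> x y = \<gamma> y x"
    using wg unfolding weight_fun_def by auto
  have asym: "\<And>x y. \<alpha> x y = \<alpha> y x" using w unfolding weight_fun_def by auto
  have ppos: "\<And>u. 0 < deg \<alpha> u" using fs unfolding fully_supported_def by auto
  have off: "\<gamma> (u,v) (u',v') = 0" if "v \<noteq> v'" for u v u' v'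
  proof -
    have "deg \<beta> v * (\<Sum>u''\<in>UNIV. \<gamma> (u, v) (u'', v')) = 0"
      using c5[of v u v'] H_facts(3)[OF H that] by simp
    then have "(\<Sum>u''\<in>UNIV. \<gamma> (u, v) (u'', v')) = 0"
      using H_facts(1,2)[OF H, of v] by simp
    then show ?thesis using gnn by (simp add: sum_nonneg_eq_0_iff)
  qed
  have diag: "deg \<alpha> u * \<gamma> (u,v) (u',v) = \<alpha> u u' * deg \<gamma> (u,v)" for u v u'
  proof -
    have "(\<Sum>v'\<in>UNIV. \<gamma> (u, v) (u', v')) = \<gamma> (u,v) (u',v)"
    proof -
      have "\<gamma> (u,v) (u',\<not> v) = 0" by (rule off) simp
      then show ?thesis by (cases v) (simp_all add: UNIV_bool)
    qed
    then show ?thesis using c4[of u v u'] by simp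
  qed
  define h where "h v u = deg \<gamma> (u,v) / deg \<alpha> u" for v u
  have hr: "deg \<gamma> (u,v) = deg \<alpha> u * h v u" for u v
    using ppos[of u] unfolding h_def by simp
  have g: "\<gamma> (u,v) (u',v) = \<alpha> u u' * h v u" for u v u'
    using diag[of u v u'] ppos[of u] unfolding h_def by (simp add: field_simps)
  have eq: "h v u = h v u'" if "0 < \<alpha> u u'" for v u u'
  proof -
    have "\<alpha> u u' * h v u = \<alpha> u u' * h v u'"
      using g[of u v u'] g[of u' v u] gsym[of "(u,v)" "(u',v)"] asym[of u u'] by (simp, metis)
    then show ?thesis using that by simp
  qed
  have tr: "h v u = h v u'" if "(\<lambda>x y. 0 < \<alpha> x y)\<^sup>+\<^sup>+ u u'" for v u u'
    using that
  proof (induction rule: tranclp_induct)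
    case (base y) then show ?case using eq by blast
  next
    case (step y z) then show ?case using eq[of y z v] by simp
  qed
  have const: "h v u = h v u'" for v u u'
    using tr conn unfolding graph_connected_def by (cases "u = u'") auto
  have hq: "h v u = \<beta> v v" for v u
  proof -
    have "deg \<beta> v = (\<Sum>x\<in>UNIV. deg \<alpha> x * h v u)"
    proof -
      have "(\<Sum>x\<in>UNIV. deg \<gamma> (x, v)) = (\<Sum>x\<in>UNIV. deg \<alpha> x * h v u)"
      proof (rule sum.cong[OF refl])
        fix x
        show "deg \<gamma> (x, v) = deg \<alpha> x * h v u" using hr[of x v] const[of v x u] by simp
      qed
      then show ?thesis using c3[of v] by simp
    qed
    also have "\<dots> = h v u" using sum_deg[OF w] by (simp add: sum_distrib_right[symmetric])
    finally show ?thesis using H_facts(1)[OF H] by simp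
  qed
  show ?thesis
  proof (rule ext, rule ext)
    fix x y :: "'a \<times> bool"
    obtain u v u' v' where xy: "x = (u,v)" "y = (u',v')" by fastforce
    show "\<gamma> x y = tensor \<alpha> \<beta> x y"
    proof (cases "v = v'")
      case True then show ?thesis using g hq xy by (simp add: tensor_def)
    next
      case False then show ?thesis using off xy H_facts(3)[OF H False] by (simp add: tensor_def)
    qed
  qed
qed

lemma notconn:
  assumes w: "weight_fun \<alpha>" and fs: "fully_supported \<alpha>" and nc: "\<not> graph_connected \<alpha>"
    and H: "in_family_H \<beta>"
  shows "\<not> strongly_disjoint \<alpha> \<beta>"
proof -
  let ?R = "\<lambda>x y. 0 < \<alpha> x y"
  obtain u0 u1 where u01: "u0 \<noteq> u1" "\<not> ?R\<^sup>+\<^sup>+ u0 u1"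
    using nc unfolding graph_connected_def by auto
  define S where "S = {x. ?R\<^sup>*\<^sup>* u0 x}"
  have u0S: "u0 \<in> S" unfolding S_def by simp
  have u1S: "u1 \<notin> S"
  proof
    assume "u1 \<in> S"
    then have "?R\<^sup>*\<^sup>* u0 u1" unfolding S_def by simp
    then show False using u01 by (auto dest: rtranclpD)
  qed
  have anN: "\<And>x y. 0 \<le> \<alpha> x y" and asym: "\<And>x y. \<alpha> x y = \<alpha> y x"
    using w unfolding weight_fun_def by auto
  have ppos: "\<And>u. 0 < deg \<alpha> u" using fs unfolding fully_supported_def by auto
  have cl: "x \<in> S \<longleftrightarrow> y \<in> S" if "\<alpha> x y \<noteq> 0" for x y
  proof -
    have "?R x y" "?R y x" using that anN[of x y] asym[of x y] by auto
    then show ?thesis unfolding S_def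
      by (auto intro: rtranclp.rtrancl_into_rtrancl)
  qed
  define P where "P = (\<Sum>u\<in>S. deg \<alpha> u)"
  define Q where "Q = (\<Sum>u\<in>-S. deg \<alpha> u)"
  have PQ: "P + Q = 1" using sum_deg[OF w] sum_split_compl[of "deg \<alpha>" S]
    unfolding P_def Q_def by simp
  have P0: "0 \<le> P" unfolding P_def using ppos by (simp add: less_imp_le sum_nonneg)
  have Qpos: "0 < Q"
  proof -
    have "deg \<alpha> u1 \<le> Q" unfolding Q_def
      by (rule member_le_sum) (use u1S ppos in \<open>auto simp: less_imp_le\<close>)
    then show ?thesis using ppos[of u1] by simp
  qed
  define g where "g u = (if u \<in> S then Q else - P)" for u
  have gb: "- 1 \<le> g u" "g u \<le> 1" for u using P0 Qpos PQ unfolding g_def by auto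
  have gcl: "\<alpha> u u' * g u = \<alpha> u u' * g u'" for u u'
    using cl[of u u'] unfolding g_def by (cases "\<alpha> u u' = 0") auto
  have sA: "(\<Sum>u\<in>S. deg \<alpha> u * g u) = P * Q"
  proof -
    have "(\<Sum>u\<in>S. deg \<alpha> u * g u) = (\<Sum>u\<in>S. deg \<alpha> u * Q)"
      by (rule sum.cong) (auto simp: g_def)
    then show ?thesis by (simp add: P_def sum_distrib_right)
  qed
  have sB: "(\<Sum>u\<in>-S. deg \<alpha> u * g u) = Q * (- P)"
  proof -
    have "(\<Sum>u\<in>-S. deg \<alpha> u * g u) = (\<Sum>u\<in>-S. deg \<alpha> u * (- P))"
      by (rule sum.cong) (auto simp: g_def)
    then show ?thesis by (simp only: Q_def sum_distrib_right)
  qed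
  have sg: "(\<Sum>u\<in>UNIV. deg \<alpha> u * g u) = 0"
    using sum_split_compl[of "\<lambda>u. deg \<alpha> u * g u" S] sA sB by simp
  define a where "a = \<beta> True True"
  define b where "b = \<beta> False False"
  have ab: "a + b = 1" "0 < a" "0 < b" using H_facts[OF H] unfolding a_def b_def by auto
  define c where "c = min a b"
  have cpos: "0 < c" and ca: "c \<le> a" and cb: "c \<le> b" using ab unfolding c_def by auto
  define f where "f v u = (if v then a + c * g u else b - c * g u)" for v u
  have fnn: "0 \<le> f v u" for v u
  proof -
    have "\<bar>c * g u\<bar> \<le> c" using gb[of u] cpos by (simp add: abs_mult abs_le_iff)
    then show ?thesis unfolding f_def using ca cb by (cases v) auto
  qed
  have fsum: "f True u + f False u = 1" for u using ab unfolding f_def by simp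
  have fcl: "\<alpha> u u' * f v u = \<alpha> u u' * f v u'" for u u' v
    using gcl[of u u'] unfolding f_def by (cases v) (auto simp: algebra_simps)
  define \<gamma> where "\<gamma> x y = (if snd x = snd y then \<alpha> (fst x) (fst y) * f (snd x) (fst x) else 0)"
    for x y
  have dg: "deg \<gamma> (u,v) = deg \<alpha> u * f v u" for u v
  proof -
    have "deg \<gamma> (u,v) = (\<Sum>u'\<in>UNIV. \<alpha> u u' * f v u)"
      unfolding deg_prod \<gamma>_def by (simp add: UNIV_bool)
    then show ?thesis unfolding deg_def by (simp add: sum_distrib_right)
  qed
  have sf: "(\<Sum>u\<in>UNIV. deg \<alpha> u * f v u) = deg \<beta> v" for v
  proof (cases v)
    case True
    have "(\<Sum>u\<in>UNIV. deg \<alpha> u * f v u) = (\<Sum>u\<in>UNIV. a * deg \<alpha> u + c * (deg \<alpha> u * g u))"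
      using True unfolding f_def by (simp add: algebra_simps)
    also have "\<dots> = a" using sg sum_deg[OF w]
      by (simp add: sum.distrib sum_distrib_left[symmetric])
    finally show ?thesis using True H_facts(1)[OF H] a_def by simp
  next
    case False
    have "(\<Sum>u\<in>UNIV. deg \<alpha> u * f v u) = (\<Sum>u\<in>UNIV. b * deg \<alpha> u - c * (deg \<alpha> u * g u))"
      using False unfolding f_def by (simp add: algebra_simps)
    also have "\<dots> = b" using sg sum_deg[OF w]
      by (simp add: sum_subtractf sum_distrib_left[symmetric])
    finally show ?thesis using False H_facts(1)[OF H] b_def by simp
  qed
  have wg: "weight_fun \<gamma>"
    unfolding weight_fun_def
  proof (intro conjI allI)
    fix x y :: "'a \<times> bool"
    show "0 \<le> \<gamma> x y" unfolding \<gamma>_def using anN fnn by simp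
    obtain u v u' v' where xy: "x = (u,v)" "y = (u',v')" by fastforce
    have "\<alpha> u u' * f v u = \<alpha> u' u * f v u'" using fcl[of u u' v] asym[of u u'] by simp
    then show "\<gamma> x y = \<gamma> y x" unfolding \<gamma>_def xy by auto
  next
    have "(\<Sum>x\<in>UNIV. \<Sum>y\<in>UNIV. \<gamma> x y) = (\<Sum>x\<in>UNIV. deg \<gamma> x)" unfolding deg_def ..
    also have "\<dots> = (\<Sum>u\<in>UNIV. \<Sum>v\<in>UNIV. deg \<alpha> u * f v u)"
      by (simp add: sum_UNIV_prod dg)
    also have "\<dots> = (\<Sum>u\<in>UNIV. deg \<alpha> u)"
      using fsum by (simp add: UNIV_bool distrib_left[symmetric] add.commute)
    finally show "(\<Sum>x\<in>UNIV. \<Sum>y\<in>UNIV. \<gamma> x y) = 1" using sum_deg[OF w] by simp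
  qed
  have J: "weight_joining \<alpha> \<beta> \<gamma>"
    unfolding weight_joining_def
  proof (intro conjI allI wg)
    fix u
    show "(\<Sum>v\<in>UNIV. deg \<gamma> (u, v)) = deg \<alpha> u"
      using fsum[of u] by (simp add: dg UNIV_bool distrib_left[symmetric] add.commute)
  next
    fix v
    show "(\<Sum>u\<in>UNIV. deg \<gamma> (u, v)) = deg \<beta> v" using sf by (simp add: dg)
  next
    fix u u' v
    show "deg \<alpha> u * (\<Sum>v'\<in>UNIV. \<gamma> (u, v) (u', v')) = \<alpha> u u' * deg \<gamma> (u, v)"
      unfolding dg \<gamma>_def by (cases v) (simp_all add: UNIV_bool)
  next
    fix u v v'
    show "deg \<beta> v * (\<Sum>u'\<in>UNIV. \<gamma> (u, v) (u', v')) = \<beta> v v' * deg \<gamma> (u, v)"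
    proof (cases "v = v'")
      case True
      then show ?thesis unfolding dg \<gamma>_def deg_def[of \<alpha>] using H_facts(1)[OF H, of v]
        by (simp add: sum_distrib_left sum_distrib_right mult.commute mult.left_commute)
    next
      case False
      then show ?thesis unfolding \<gamma>_def using H_facts(3)[OF H False] by simp
    qed
  qed
  obtain u' where au': "\<alpha> u0 u' \<noteq> 0"
  proof -
    have "deg \<alpha> u0 \<noteq> 0" using ppos[of u0] by simp
    then show ?thesis using that unfolding deg_def by (meson sum.neutral)
  qed
  have "\<gamma> (u0,True) (u',True) \<noteq> tensor \<alpha> \<beta> (u0,True) (u',True)"
    using au' cpos Qpos u0S unfolding \<gamma>_def tensor_def f_def g_def a_def by simp
  then show ?thesis using J unfolding strongly_disjoint_def by metis
qed

theorem proposition7p2: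
  fixes \<alpha> :: "'u::finite \<Rightarrow> 'u \<Rightarrow> real"
  assumes "weight_fun \<alpha>" and "fully_supported \<alpha>"
  shows "(graph_connected \<alpha> \<longleftrightarrow> (\<exists>\<beta>. in_family_H \<beta> \<and> strongly_disjoint \<alpha> \<beta>))
       \<and> ((\<exists>\<beta>. in_family_H \<beta> \<and> strongly_disjoint \<alpha> \<beta>) \<longleftrightarrow> (\<forall>\<beta>. in_family_H \<beta> \<longrightarrow> strongly_disjoint \<alpha> \<beta>))"
proof -
  define \<beta>0 :: "bool \<Rightarrow> bool \<Rightarrow> real" where "\<beta>0 x y = (if x = y then 1/2 else 0)" for x y
  have H0: "in_family_H \<beta>0"
    unfolding in_family_H_def weight_fun_def \<beta>0_def by (simp add: UNIV_bool)
  have CA: "graph_connected \<alpha> \<Longrightarrow> in_family_H \<beta> \<Longrightarrow> strongly_disjoint \<alpha> \<beta>" for \<beta>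
    using conn_sd[OF assms] unfolding strongly_disjoint_def by blast
  have EC: "in_family_H \<beta> \<Longrightarrow> strongly_disjoint \<alpha> \<beta> \<Longrightarrow> graph_connected \<alpha>" for \<beta>
    using notconn[OF assms] by blast
  show ?thesis using CA EC H0 by blast
qed

end
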